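(* There is an absolute constant $c>0$ such that the following holds. Let $n\ge 1$, $d\ge 1$, $t\ge 0$, and let $Q$ be any quantum circuit on $n$ qubits of depth $d$ whose gates are Clifford gates (from $\{H, S, \mathrm{CNOT}\}$) together with exactly $t$ gates $T=\mathrm{diag}(1,e^{i\pi/4})$. Then there exists a classical circuit $C:\{0,1\}^n\to\{0,1\}^n$, built from $\mathrm{NOT}$, $\mathrm{AND}$, $\mathrm{OR}$ gates of fan-in at most $2$ (arbitrary fan-out), of depth at most $c\,(d+t)$, that p-simulates $Q$; that is, for every $x\in\{0,1\}^n$, $\langle C(x)|\,Q\,|x\rangle\neq 0$.
   Context: The quantum circuit $Q$ takes as input a computational basis state $|x\rangle$, $x\in\{0,1\}^n$, on its $n$ qubit lines and all $n$ qubits are measured in the computational basis at the end; the unitary implemented by the circuit is also denoted $Q$. The depth of a quantum circuit is its number of layers of gates acting on disjoint qubits. $H$ is the Hadamard gate, $S=\mathrm{diag}(1,i)$, and $\mathrm{CNOT}$ is the controlled-NOT gate. The circuit $Q$ defines the relation $\mathcal{R}(Q)=\{(x,y)\in\{0,1\}^n\times\{0,1\}^n : \langle y|Q|x\rangle\neq 0\}$, and a classical circuit $C:\{0,1\}^n\to\{0,1\}^n$ is said to p-simulate $Q$ if $(x,C(x))\in\mathcal{R}(Q)$ for all $x\in\{0,1\}^n$. The depth of a classical circuit is the length of its longest input-to-output path of gates. *)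

theory Defs
  imports Complex_Main
begin

text \<open>Qubits are numbered 0..n-1; computational basis states are bool lists of length n.\<close>

datatype qgate = Hg nat | Sg nat | CNOTg nat nat | Tg nat

fun qubits :: "qgate \<Rightarrow> nat set" where
  "qubits (Hg q) = {q}"
| "qubits (Sg q) = {q}"
| "qubits (Tg q) = {q}"
| "qubits (CNOTg c t) = {c, t}"

fun qgate_wf :: "nat \<Rightarrow> qgate \<Rightarrow> bool" where
  "qgate_wf n (CNOTg c t) = (c < n \<and> t < n \<and> c \<noteq> t)"
| "qgate_wf n g = (\<forall>q\<in>qubits g. q < n)"

fun is_T :: "qgate \<Rightarrow> bool" where
  "is_T (Tg _) = True"
| "is_T _ = False"

definition layer_wf :: "nat \<Rightarrow> qgate list \<Rightarrow> bool" where
  "layer_wf n L \<longleftrightarrow> L \<noteq> [] \<and> (\<forall>g\<in>set L. qgate_wf n g) \<and>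
     (\<forall>i<length L. \<forall>j<length L. i \<noteq> j \<longrightarrow> qubits (L ! i) \<inter> qubits (L ! j) = {})"

type_synonym qcircuit = "qgate list list"

definition qcirc_wf :: "nat \<Rightarrow> qcircuit \<Rightarrow> bool" where
  "qcirc_wf n Q \<longleftrightarrow> (\<forall>L\<in>set Q. layer_wf n L)"

definition qdepth :: "qcircuit \<Rightarrow> nat" where
  "qdepth Q = length Q"

definition t_count :: "qcircuit \<Rightarrow> nat" where
  "t_count Q = length (filter is_T (concat Q))"

type_synonym qstate = "bool list \<Rightarrow> complex"

text \<open>Action of a gate on a state vector (amplitude function on basis strings).
  H|b> = (|0> + (-1)^b |1>)/sqrt 2, S = diag(1,i), T = diag(1, e^{i pi/4}),
  CNOT c t flips target t when control c is 1.\<close>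
fun apply_gate :: "qgate \<Rightarrow> qstate \<Rightarrow> qstate" where
  "apply_gate (Hg q) \<psi> = (\<lambda>y. (\<psi> (y[q := False]) + (if y ! q then -1 else 1) * \<psi> (y[q := True]))
                               / complex_of_real (sqrt 2))"
| "apply_gate (Sg q) \<psi> = (\<lambda>y. (if y ! q then \<i> else 1) * \<psi> y)"
| "apply_gate (Tg q) \<psi> = (\<lambda>y. (if y ! q then exp (\<i> * complex_of_real (pi / 4)) else 1) * \<psi> y)"
| "apply_gate (CNOTg c t) \<psi> = (\<lambda>y. \<psi> (y[t := (y ! t \<noteq> y ! c)]))"

definition basis_state :: "bool list \<Rightarrow> qstate" where
  "basis_state x = (\<lambda>y. if y = x then 1 else 0)"

text \<open>Layers are applied in order; gates within a layer act on disjoint qubits, so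
  applying them in sequence realises the layer's tensor-product unitary.\<close>
definition run_qcirc :: "qcircuit \<Rightarrow> qstate \<Rightarrow> qstate" where
  "run_qcirc Q \<psi> = fold apply_gate (concat Q) \<psi>"

definition qamp :: "qcircuit \<Rightarrow> bool list \<Rightarrow> bool list \<Rightarrow> complex" where
  "qamp Q x y = run_qcirc Q (basis_state x) y"

text \<open>Wires 0..n-1 are the inputs; wire n+k is the output of gate k, which may only read
  wires with smaller index (arbitrary fan-out). A circuit is a gate list plus a list of
  output wires.\<close>
datatype cgate = NotG nat | AndG nat nat | OrG nat nat

fun cgate_inputs :: "cgate \<Rightarrow> nat set" where
  "cgate_inputs (NotG i) = {i}"
| "cgate_inputs (AndG i j) = {i, j}"
| "cgate_inputs (OrG i j) = {i, j}"

type_synonym ccircuit = "cgate list \<times> nat list"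

definition ccirc_wf :: "nat \<Rightarrow> ccircuit \<Rightarrow> bool" where
  "ccirc_wf n C \<longleftrightarrow> (\<forall>k<length (fst C). \<forall>i\<in>cgate_inputs (fst C ! k). i < n + k)
     \<and> length (snd C) = n \<and> (\<forall>w\<in>set (snd C). w < n + length (fst C))"

fun cgate_val :: "bool list \<Rightarrow> cgate \<Rightarrow> bool" where
  "cgate_val vs (NotG i) = (\<not> vs ! i)"
| "cgate_val vs (AndG i j) = (vs ! i \<and> vs ! j)"
| "cgate_val vs (OrG i j) = (vs ! i \<or> vs ! j)"

definition wire_vals :: "cgate list \<Rightarrow> bool list \<Rightarrow> bool list" where
  "wire_vals gs x = foldl (\<lambda>vs g. vs @ [cgate_val vs g]) x gs"

definition ccirc_eval :: "ccircuit \<Rightarrow> bool list \<Rightarrow> bool list" where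
  "ccirc_eval C x = map (\<lambda>w. wire_vals (fst C) x ! w) (snd C)"

fun cgate_depth :: "nat list \<Rightarrow> cgate \<Rightarrow> nat" where
  "cgate_depth ds (NotG i) = Suc (ds ! i)"
| "cgate_depth ds (AndG i j) = Suc (max (ds ! i) (ds ! j))"
| "cgate_depth ds (OrG i j) = Suc (max (ds ! i) (ds ! j))"

definition wire_depths :: "nat \<Rightarrow> cgate list \<Rightarrow> nat list" where
  "wire_depths n gs = foldl (\<lambda>ds g. ds @ [cgate_depth ds g]) (replicate n 0) gs"

definition ccirc_depth :: "nat \<Rightarrow> ccircuit \<Rightarrow> nat" where
  "ccirc_depth n C = fold max (map (\<lambda>w. wire_depths n (fst C) ! w) (snd C)) 0"

end

theory Submission
  imports Defs
begin


definition xorv :: "bool list \<Rightarrow> (nat \<Rightarrow> bool) \<Rightarrow> bool list" where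
  "xorv y u = map (\<lambda>i. y ! i \<noteq> u i) [0..<length y]"

definition psgn :: "(nat \<Rightarrow> bool) \<Rightarrow> bool list \<Rightarrow> complex" where
  "psgn v y = (\<Prod>i<length y. if v i \<and> y ! i then -1 else 1)"

definition rep :: "nat \<Rightarrow> qstate \<Rightarrow> complex \<Rightarrow> (nat \<Rightarrow> bool) \<Rightarrow> (nat \<Rightarrow> bool) \<Rightarrow> qstate \<Rightarrow> bool" where
  "rep n \<psi> c u v \<phi> \<longleftrightarrow> (\<forall>y. length y = n \<longrightarrow> \<psi> y = c * psgn v y * \<phi> (xorv y u))"

lemma xorv_len[simp]: "length (xorv y u) = length y"
  by (simp add: xorv_def)

lemma xorv_nth[simp]: "i < length y \<Longrightarrow> xorv y u ! i = (y ! i \<noteq> u i)"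
  by (simp add: xorv_def)

lemma xorv_upd: "q < length y \<Longrightarrow> xorv (y[q:=b]) u = (xorv y u)[q := (b \<noteq> u q)]"
  by (rule nth_equalityI) (auto simp: nth_list_update)

lemma xorv_upd2: "q < length y \<Longrightarrow> xorv y (u(q:=a)) = (xorv y u)[q := (y ! q \<noteq> a)]"
  by (rule nth_equalityI) (auto simp: nth_list_update)

lemma xorv_xorv[simp]: "xorv (xorv y u) u = y"
  by (rule nth_equalityI) auto

lemma psgn_split: assumes "q < length y"
  shows "psgn v y = psgn (v(q:=False)) y * (if v q \<and> y ! q then -1 else 1)"
proof -
  have "psgn v y = (if v q \<and> y ! q then -1 else 1) * (\<Prod>i\<in>{..<length y}-{q}. if v i \<and> y ! i then -1 else 1)"
    unfolding psgn_def using assms by (subst prod.remove[of _ q]) auto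
  moreover have "psgn (v(q:=False)) y = (\<Prod>i\<in>{..<length y}-{q}. if v i \<and> y ! i then -1 else 1)"
    unfolding psgn_def using assms by (subst prod.remove[of _ q]) (auto intro!: prod.cong)
  ultimately show ?thesis by simp
qed

lemma psgn_upd0: assumes "q < length y"
  shows "psgn (v(q:=False)) (y[q:=b]) = psgn (v(q:=False)) y"
  unfolding psgn_def using assms by (auto intro!: prod.cong simp: nth_list_update)

lemma psgn_upd: assumes "q < length y"
  shows "psgn v (y[q:=b]) = psgn (v(q:=False)) y * (if v q \<and> b then -1 else 1)"
  using psgn_split[of q "y[q:=b]" v] psgn_upd0[OF assms] assms by simp

lemma psgn_nz: "psgn v y \<noteq> 0"
  unfolding psgn_def by (auto simp: prod_zero_iff)

lemma rep_H: assumes r: "rep n \<psi> c u v \<phi>" and q: "q < n"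
  shows "rep n (apply_gate (Hg q) \<psi>) (if u q \<and> v q then -c else c) (u(q:=v q)) (v(q:=u q)) (apply_gate (Hg q) \<phi>)"
  unfolding rep_def
proof (intro allI impI)
  fix y :: "bool list" assume y: "length y = n"
  let ?w = "xorv y u"
  let ?p = "psgn (v(q:=False)) y"
  have e: "\<And>b. \<psi> (y[q:=b]) = c * (?p * (if v q \<and> b then -1 else 1)) * \<phi> (?w[q := (b \<noteq> u q)])"
    using r y q by (simp add: rep_def psgn_upd xorv_upd)
  have s: "psgn (v(q:=u q)) y = ?p * (if u q \<and> y!q then -1 else 1)"
    using psgn_split[of q y "v(q:=u q)"] y q by simp
  have z: "xorv y (u(q:=v q)) = ?w[q := (y!q \<noteq> v q)]" using xorv_upd2 y q by simp
  have lq: "q < length ?w" using y q by simp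
  show "apply_gate (Hg q) \<psi> y = (if u q \<and> v q then -c else c) * psgn (v(q:=u q)) y * apply_gate (Hg q) \<phi> (xorv y (u(q:=v q)))"
    using lq
    apply (simp only: apply_gate.simps e s z)
    apply (cases "u q"; cases "v q"; cases "y ! q"; simp add: field_simps)
    done
qed

definition om :: complex where "om = exp (\<i> * complex_of_real (pi / 4))"
definition omc :: complex where "omc = exp (- (\<i> * complex_of_real (pi / 4)))"

lemma om_omc: "om * omc = 1"
  unfolding om_def omc_def by (simp add: exp_add[symmetric])

lemma om_nz: "om \<noteq> 0" unfolding om_def by simp
lemma omc_nz: "omc \<noteq> 0" unfolding omc_def by simp

definition apply_Tm :: "bool \<Rightarrow> nat \<Rightarrow> qstate \<Rightarrow> qstate" where
  "apply_Tm b q \<phi> = (\<lambda>y. (if y ! q then (if b then omc else om) else 1) * \<phi> y)"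

lemma rep_S: assumes r: "rep n \<psi> c u v \<phi>" and q: "q < n"
  shows "rep n (apply_gate (Sg q) \<psi>) (if u q then -\<i> * c else c) u (v(q:= (v q \<noteq> u q))) (apply_gate (Sg q) \<phi>)"
  unfolding rep_def
proof (intro allI impI)
  fix y :: "bool list" assume y: "length y = n"
  let ?p = "psgn (v(q:=False)) y"
  have s1: "psgn v y = ?p * (if v q \<and> y!q then -1 else 1)"
    using psgn_split[of q y v] y q by simp
  have s2: "psgn (v(q:= (v q \<noteq> u q))) y = ?p * (if (v q \<noteq> u q) \<and> y!q then -1 else 1)"
    using psgn_split[of q y "v(q:= (v q \<noteq> u q))"] y q by simp
  have e: "\<psi> y = c * psgn v y * \<phi> (xorv y u)" using r y by (simp add: rep_def)
  have xq: "xorv y u ! q = (y ! q \<noteq> u q)" using y q by simp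
  show "apply_gate (Sg q) \<psi> y = (if u q then -\<i> * c else c) * psgn (v(q:= (v q \<noteq> u q))) y * apply_gate (Sg q) \<phi> (xorv y u)"
    apply (simp only: apply_gate.simps e s1 s2 xq)
    apply (cases "u q"; cases "v q"; cases "y ! q"; simp add: field_simps)
    done
qed

lemma rep_T: assumes r: "rep n \<psi> c u v \<phi>" and q: "q < n"
  shows "rep n (apply_gate (Tg q) \<psi>) (if u q then om * c else c) u v (apply_Tm (u q) q \<phi>)"
  unfolding rep_def
proof (intro allI impI)
  fix y :: "bool list" assume y: "length y = n"
  have e: "\<psi> y = c * psgn v y * \<phi> (xorv y u)" using r y by (simp add: rep_def)
  have xq: "xorv y u ! q = (y ! q \<noteq> u q)" using y q by simp
  have o: "om * omc = 1" by (rule om_omc)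
  show "apply_gate (Tg q) \<psi> y = (if u q then om * c else c) * psgn v y * apply_Tm (u q) q \<phi> (xorv y u)"
    apply (simp only: apply_gate.simps apply_Tm_def e xq flip: om_def)
    using o apply (cases "u q"; cases "y ! q"; simp add: field_simps)
    done
qed

lemma rep_CNOT: assumes r: "rep n \<psi> c0 u v \<phi>" and q: "a < n" "b < n" "a \<noteq> b"
  shows "rep n (apply_gate (CNOTg a b) \<psi>) c0 (u(b := (u b \<noteq> u a))) (v(a := (v a \<noteq> v b))) (apply_gate (CNOTg a b) \<phi>)"
  unfolding rep_def
proof (intro allI impI)
  fix y :: "bool list" assume y: "length y = n"
  let ?w = "xorv y u"
  let ?p = "psgn ((v(b:=False))(a:=False)) y"
  let ?y' = "y[b := (y!b \<noteq> y!a)]"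
  have e: "\<psi> ?y' = c0 * psgn v ?y' * \<phi> (xorv ?y' u)" using r y by (simp add: rep_def)
  have s1: "psgn v ?y' = ?p * (if v a \<and> y!a then -1 else 1) * (if v b \<and> (y!b \<noteq> y!a) then -1 else 1)"
    using psgn_upd[of b y v] psgn_split[of a y "v(b:=False)"] y q by simp
  have s2: "psgn (v(a := (v a \<noteq> v b))) y = ?p * (if v b \<and> y!b then -1 else 1) * (if (v a \<noteq> v b) \<and> y!a then -1 else 1)"
    using psgn_split[of a y "v(a := (v a \<noteq> v b))"] psgn_split[of b y "v(a := False)"] y q
    by (simp add: fun_upd_twist)
  have x1: "xorv ?y' u = ?w[b := ((y!b \<noteq> y!a) \<noteq> u b)]" using xorv_upd y q by simp
  have x2: "(xorv y (u(b := (u b \<noteq> u a))))[b := (xorv y (u(b := (u b \<noteq> u a)))) ! b \<noteq> (xorv y (u(b := (u b \<noteq> u a)))) ! a] = ?w[b := ((y!b \<noteq> y!a) \<noteq> u b)]"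
    using y q by (auto intro!: nth_equalityI simp: nth_list_update)
  show "apply_gate (CNOTg a b) \<psi> y = c0 * psgn (v(a := (v a \<noteq> v b))) y * apply_gate (CNOTg a b) \<phi> (xorv y (u(b := (u b \<noteq> u a))))"
    apply (simp only: apply_gate.simps e s1 s2 x1 x2)
    apply (cases "v a"; cases "v b"; cases "y ! a"; cases "y ! b"; simp)
    done
qed

type_synonym frame = "(nat \<Rightarrow> bool) \<times> (nat \<Rightarrow> bool)"

fun pstep :: "qgate \<Rightarrow> frame \<Rightarrow> frame" where
  "pstep (Hg q) (u, v) = (u(q := v q), v(q := u q))"
| "pstep (Sg q) (u, v) = (u, v(q := (v q \<noteq> u q)))"
| "pstep (Tg q) (u, v) = (u, v)"
| "pstep (CNOTg a b) (u, v) = (u(b := (u b \<noteq> u a)), v(a := (v a \<noteq> v b)))"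

fun tbit :: "qgate \<Rightarrow> frame \<Rightarrow> bool list" where
  "tbit (Tg q) (u, v) = [u q]"
| "tbit _ _ = []"

fun cs :: "qgate list \<Rightarrow> frame \<Rightarrow> frame \<times> bool list" where
  "cs [] p = (p, [])"
| "cs (g # gs) p = (fst (cs gs (pstep g p)), tbit g p @ snd (cs gs (pstep g p)))"

fun run_mod :: "qgate list \<Rightarrow> bool list \<Rightarrow> qstate \<Rightarrow> qstate" where
  "run_mod [] bs \<phi> = \<phi>"
| "run_mod (Tg q # gs) bs \<phi> = run_mod gs (tl bs) (apply_Tm (hd bs) q \<phi>)"
| "run_mod (g # gs) bs \<phi> = run_mod gs bs (apply_gate g \<phi>)"

lemma rep_gate: assumes r: "rep n \<psi> c u v \<phi>" and wf: "qgate_wf n g" and c: "c \<noteq> 0"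
  shows "\<exists>c'. c' \<noteq> 0 \<and> rep n (apply_gate g \<psi>) c' (fst (pstep g (u,v))) (snd (pstep g (u,v)))
     (if is_T g then apply_Tm (hd (tbit g (u,v))) (case g of Tg q \<Rightarrow> q | _ \<Rightarrow> 0) \<phi> else apply_gate g \<phi>)"
proof (cases g)
  case (Hg q) then show ?thesis using rep_H[OF r, of q] wf c by (intro exI[of _ "if u q \<and> v q then -c else c"]) auto
next
  case (Sg q) then show ?thesis using rep_S[OF r, of q] wf c by (intro exI[of _ "if u q then -\<i> * c else c"]) auto
next
  case (Tg q) then show ?thesis using rep_T[OF r, of q] wf c om_nz by (intro exI[of _ "if u q then om * c else c"]) auto
next
  case (CNOTg a b) then show ?thesis using rep_CNOT[OF r, of a b] wf c by (intro exI[of _ c]) auto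
qed

lemma rep_run: "rep n \<psi> c u v \<phi> \<Longrightarrow> c \<noteq> 0 \<Longrightarrow> \<forall>g\<in>set gs. qgate_wf n g \<Longrightarrow>
  \<exists>c'. c' \<noteq> 0 \<and> rep n (fold apply_gate gs \<psi>) c' (fst (fst (cs gs (u,v)))) (snd (fst (cs gs (u,v))))
      (run_mod gs (snd (cs gs (u,v))) \<phi>)"
proof (induction gs arbitrary: \<psi> c u v \<phi>)
  case Nil then show ?case by auto
next
  case (Cons g gs)
  obtain c' where c': "c' \<noteq> 0" and r': "rep n (apply_gate g \<psi>) c' (fst (pstep g (u,v))) (snd (pstep g (u,v)))
     (if is_T g then apply_Tm (hd (tbit g (u,v))) (case g of Tg q \<Rightarrow> q | _ \<Rightarrow> 0) \<phi> else apply_gate g \<phi>)"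
    using rep_gate[OF Cons.prems(1) _ Cons.prems(2)] Cons.prems(3) by auto
  from Cons.IH[OF r' c'] Cons.prems(3)
  obtain c'' where c'': "c'' \<noteq> 0" and r'': "rep n (fold apply_gate gs (apply_gate g \<psi>)) c''
     (fst (fst (cs gs (pstep g (u,v))))) (snd (fst (cs gs (pstep g (u,v)))))
     (run_mod gs (snd (cs gs (pstep g (u,v))))
       (if is_T g then apply_Tm (hd (tbit g (u,v))) (case g of Tg q \<Rightarrow> q | _ \<Rightarrow> 0) \<phi> else apply_gate g \<phi>))"
    by (auto simp only: prod.collapse set_simps ball_simps)
  have re: "run_mod (g#gs) (tbit g (u,v) @ bs) \<phi> = run_mod gs bs (if is_T g then apply_Tm (hd (tbit g (u,v))) (case g of Tg q \<Rightarrow> q | _ \<Rightarrow> 0) \<phi> else apply_gate g \<phi>)" for bs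
    by (cases g) auto
  show ?case using c'' r'' by (simp only: fold_Cons comp_def cs.simps fst_conv snd_conv re) blast
qed

definition nz :: "nat \<Rightarrow> qstate \<Rightarrow> bool" where
  "nz n \<phi> \<longleftrightarrow> (\<exists>y. length y = n \<and> \<phi> y \<noteq> 0)"

lemma nz_gate: assumes "nz n \<phi>" "qgate_wf n g" shows "nz n (apply_gate g \<phi>)"
proof (rule ccontr)
  assume z: "\<not> nz n (apply_gate g \<phi>)"
  hence z': "\<And>y. length y = n \<Longrightarrow> apply_gate g \<phi> y = 0" by (auto simp: nz_def)
  obtain y where y: "length y = n" "\<phi> y \<noteq> 0" using assms(1) by (auto simp: nz_def)
  show False
  proof (cases g)
    case (Hg q)
    have q: "q < n" using assms(2) Hg by simp
    have "apply_gate g \<phi> (y[q:=False]) = 0" "apply_gate g \<phi> (y[q:=True]) = 0" using z' y by auto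
    hence "\<phi> (y[q:=False]) + \<phi> (y[q:=True]) = 0" "\<phi> (y[q:=False]) - \<phi> (y[q:=True]) = 0"
      using Hg q y by auto
    hence "\<phi> (y[q:=False]) = 0" "\<phi> (y[q:=True]) = 0" by (auto simp: algebra_simps)
    moreover have "y = y[q := y!q]" by simp
    ultimately show False using y by (metis (full_types))
  next
    case (Sg q) then show False using z'[OF y(1)] y by (auto split: if_splits)
  next
    case (Tg q) then show False using z'[OF y(1)] y by (auto split: if_splits)
  next
    case (CNOTg a b)
    have q: "a < n" "b < n" "a \<noteq> b" using assms(2) CNOTg by auto
    let ?y' = "y[b := (y!b \<noteq> y!a)]"
    have "?y'[b := (?y'!b \<noteq> ?y'!a)] = y"
      apply (rule nth_equalityI) using q y apply simp
      subgoal for i using q y by (cases "i = b") (auto simp: nth_list_update)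
      done
    then show False using z'[of ?y'] y CNOTg by auto
  qed
qed

lemma nz_Tm: assumes "nz n \<phi>" shows "nz n (apply_Tm b q \<phi>)"
  using assms om_nz omc_nz unfolding nz_def apply_Tm_def by (auto split: if_splits)

lemma nz_run: "nz n \<phi> \<Longrightarrow> \<forall>g\<in>set gs. qgate_wf n g \<Longrightarrow> nz n (run_mod gs bs \<phi>)"
proof (induction gs arbitrary: bs \<phi>)
  case Nil then show ?case by simp
next
  case (Cons g gs)
  show ?case
  proof (cases "is_T g")
    case True
    then obtain q where g: "g = Tg q" by (cases g) auto
    show ?thesis using Cons nz_Tm unfolding g by simp
  next
    case False
    then have e: "run_mod (g # gs) bs \<phi> = run_mod gs bs (apply_gate g \<phi>)" by (cases g) auto
    show ?thesis unfolding e using Cons nz_gate by simp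
  qed
qed



datatype bexp = BV nat | BN bexp | BA bexp bexp | BO bexp bexp

fun ev :: "bexp \<Rightarrow> bool list \<Rightarrow> bool" where
  "ev (BV i) x = x ! i"
| "ev (BN e) x = (\<not> ev e x)"
| "ev (BA a b) x = (ev a x \<and> ev b x)"
| "ev (BO a b) x = (ev a x \<or> ev b x)"

fun dep :: "bexp \<Rightarrow> nat" where
  "dep (BV i) = 0"
| "dep (BN e) = Suc (dep e)"
| "dep (BA a b) = Suc (max (dep a) (dep b))"
| "dep (BO a b) = Suc (max (dep a) (dep b))"

fun vok :: "nat \<Rightarrow> bexp \<Rightarrow> bool" where
  "vok n (BV i) = (i < n)"
| "vok n (BN e) = vok n e"
| "vok n (BA a b) = (vok n a \<and> vok n b)"
| "vok n (BO a b) = (vok n a \<and> vok n b)"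

definition BX :: "bexp \<Rightarrow> bexp \<Rightarrow> bexp" where
  "BX a b = BA (BO a b) (BN (BA a b))"

lemma BX_ev[simp]: "ev (BX a b) x = (ev a x \<noteq> ev b x)" by (auto simp: BX_def)
lemma BX_dep[simp]: "dep (BX a b) = Suc (Suc (Suc (max (dep a) (dep b))))" by (simp add: BX_def max_def)
lemma BX_vok[simp]: "vok n (BX a b) = (vok n a \<and> vok n b)" by (auto simp: BX_def)

definition FF :: bexp where "FF = BA (BV 0) (BN (BV 0))"
definition TT :: bexp where "TT = BO (BV 0) (BN (BV 0))"
lemma FF_simps[simp]: "ev FF x = False" "dep FF = 2" "vok n FF = (0 < n)" by (auto simp: FF_def)
lemma TT_simps[simp]: "ev TT x = True" "dep TT = 2" "vok n TT = (0 < n)" by (auto simp: TT_def)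

fun lut :: "bexp list \<Rightarrow> (bool list \<Rightarrow> bool) \<Rightarrow> bexp" where
  "lut [] f = (if f [] then TT else FF)"
| "lut (m # ms) f = BO (BA m (lut ms (\<lambda>bs. f (True # bs)))) (BA (BN m) (lut ms (\<lambda>bs. f (False # bs))))"

lemma lut_ev: "ev (lut ms f) x = f (map (\<lambda>m. ev m x) ms)"
proof (induction ms arbitrary: f)
  case Nil show ?case by (cases "f []") simp_all
next
  case (Cons m ms)
  show ?case by (cases "ev m x") (simp_all only: lut.simps ev.simps Cons.IH list.map simp_thms)
qed

lemma lut_dep: "\<forall>m\<in>set ms. dep m \<le> D \<Longrightarrow> dep (lut ms f) \<le> 2 * length ms + 2 + D"
proof (induction ms arbitrary: f)
  case (Cons m ms)
  have "dep (lut ms (\<lambda>bs. f (True # bs))) \<le> 2 * length ms + 2 + D"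
       "dep (lut ms (\<lambda>bs. f (False # bs))) \<le> 2 * length ms + 2 + D" "dep m \<le> D"
    using Cons by auto
  then show ?case by (simp only: lut.simps dep.simps length_Cons) (simp add: max_def)
qed simp

lemma lut_vok: "0 < n \<Longrightarrow> \<forall>m\<in>set ms. vok n m \<Longrightarrow> vok n (lut ms f)"
  by (induction ms arbitrary: f) auto

type_synonym sframe = "(nat \<Rightarrow> bexp) \<times> (nat \<Rightarrow> bexp)"

fun sstep :: "qgate \<Rightarrow> sframe \<Rightarrow> sframe" where
  "sstep (Hg q) (u, v) = (u(q := v q), v(q := u q))"
| "sstep (Sg q) (u, v) = (u, v(q := BX (v q) (u q)))"
| "sstep (Tg q) (u, v) = (u, v)"
| "sstep (CNOTg a b) (u, v) = (u(b := BX (u b) (u a)), v(a := BX (v a) (v b)))"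

fun stbit :: "qgate \<Rightarrow> sframe \<Rightarrow> bexp list" where
  "stbit (Tg q) (u, v) = [u q]"
| "stbit _ _ = []"

fun ss :: "qgate list \<Rightarrow> sframe \<Rightarrow> sframe \<times> bexp list" where
  "ss [] p = (p, [])"
| "ss (g # gs) p = (fst (ss gs (sstep g p)), stbit g p @ snd (ss gs (sstep g p)))"

definition evf :: "bool list \<Rightarrow> sframe \<Rightarrow> frame" where
  "evf x P = ((\<lambda>i. ev (fst P i) x), (\<lambda>i. ev (snd P i) x))"

lemma pstep_evf: "pstep g (evf x P) = evf x (sstep g P)"
  by (cases P; cases g) (auto simp: evf_def fun_eq_iff)

lemma tbit_evf: "tbit g (evf x P) = map (\<lambda>e. ev e x) (stbit g P)"
  by (cases P; cases g) (auto simp: evf_def)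

lemma cs_evf: "cs gs (evf x P) = (evf x (fst (ss gs P)), map (\<lambda>e. ev e x) (snd (ss gs P)))"
  by (induction gs arbitrary: P) (auto simp: pstep_evf tbit_evf)

lemma ss_append: "ss (xs @ ys) P = (fst (ss ys (fst (ss xs P))), snd (ss xs P) @ snd (ss ys (fst (ss xs P))))"
  by (induction xs arbitrary: P) auto

lemma ss_len: "length (snd (ss gs P)) = length (filter is_T gs)"
proof (induction gs arbitrary: P)
  case (Cons g gs) then show ?case by (cases P; cases g) auto
qed simp

definition vokP :: "nat \<Rightarrow> sframe \<Rightarrow> bool" where
  "vokP n P \<longleftrightarrow> (\<forall>i. vok n (fst P i) \<and> vok n (snd P i))"

lemma ss_vok: "vokP n P \<Longrightarrow> vokP n (fst (ss gs P)) \<and> (\<forall>e\<in>set (snd (ss gs P)). vok n e)"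
proof (induction gs arbitrary: P)
  case (Cons g gs)
  have "vokP n (sstep g P) \<and> (\<forall>e\<in>set (stbit g P). vok n e)"
    using Cons.prems by (cases P; cases g) (auto simp: vokP_def)
  moreover have "vokP n (fst (ss gs (sstep g P))) \<and> (\<forall>e\<in>set (snd (ss gs (sstep g P))). vok n e)"
    using Cons.IH[of "sstep g P"] calculation by simp
  ultimately show ?case by auto
qed simp

definition bnd :: "nat set \<Rightarrow> nat \<Rightarrow> sframe \<Rightarrow> bool" where
  "bnd S D P \<longleftrightarrow> (\<forall>i. dep (fst P i) \<le> (if i \<in> S then D + 3 else D) \<and> dep (snd P i) \<le> (if i \<in> S then D + 3 else D))"

lemma bnd_mono: assumes "bnd S D P" "S \<subseteq> S'" shows "bnd S' D P"
  unfolding bnd_def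
proof
  fix i
  have "dep (fst P i) \<le> (if i \<in> S then D + 3 else D)" "dep (snd P i) \<le> (if i \<in> S then D + 3 else D)"
    using assms(1) unfolding bnd_def by blast+
  then show "dep (fst P i) \<le> (if i \<in> S' then D + 3 else D) \<and> dep (snd P i) \<le> (if i \<in> S' then D + 3 else D)"
    using assms(2) by (cases "i \<in> S"; cases "i \<in> S'") auto
qed

lemma bnd_updU: assumes "bnd S D (U, W)" "q \<in> S" "dep a \<le> D + 3" shows "bnd S D (U(q:=a), W)"
  unfolding bnd_def
proof
  fix i
  have "dep (U i) \<le> (if i \<in> S then D + 3 else D)" "dep (W i) \<le> (if i \<in> S then D + 3 else D)"
    using assms(1) unfolding bnd_def by auto
  then show "dep (fst (U(q:=a), W) i) \<le> (if i \<in> S then D + 3 else D) \<and> dep (snd (U(q:=a), W) i) \<le> (if i \<in> S then D + 3 else D)"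
    using assms(2,3) by (cases "i = q") auto
qed

lemma bnd_updW: assumes "bnd S D (U, W)" "q \<in> S" "dep a \<le> D + 3" shows "bnd S D (U, W(q:=a))"
  unfolding bnd_def
proof
  fix i
  have "dep (U i) \<le> (if i \<in> S then D + 3 else D)" "dep (W i) \<le> (if i \<in> S then D + 3 else D)"
    using assms(1) unfolding bnd_def by auto
  then show "dep (fst (U, W(q:=a)) i) \<le> (if i \<in> S then D + 3 else D) \<and> dep (snd (U, W(q:=a)) i) \<le> (if i \<in> S then D + 3 else D)"
    using assms(2,3) by (cases "i = q") auto
qed

lemma bnd_get: assumes "bnd S D (U, W)" "q \<notin> S" shows "dep (U q) \<le> D" "dep (W q) \<le> D"
  using assms unfolding bnd_def by (metis fst_conv snd_conv)+

lemma sstep_bnd: assumes "qubits g \<inter> S = {}" "bnd S D P"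
  shows "bnd (S \<union> qubits g) D (sstep g P) \<and> (\<forall>e\<in>set (stbit g P). dep e \<le> D + 3)"
proof -
  obtain U W where P: "P = (U, W)" by fastforce
  have B: "bnd (S \<union> qubits g) D (U, W)" using assms(2) P bnd_mono by blast
  show ?thesis
  proof (cases g)
    case (Hg q) then have q: "q \<notin> S" using assms(1) by auto
    have d: "dep (U q) \<le> D + 3" "dep (W q) \<le> D + 3" using bnd_get[OF assms(2)[unfolded P] q] by auto
    have "bnd (S \<union> qubits g) D (U(q := W q), W(q := U q))"
      by (rule bnd_updW[OF bnd_updU[OF B]]) (use d Hg in auto)
    then show ?thesis using P Hg by simp
  next
    case (Sg q) then have q: "q \<notin> S" using assms(1) by auto
    have d: "dep (U q) \<le> D" "dep (W q) \<le> D" using bnd_get[OF assms(2)[unfolded P] q] by auto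
    have "bnd (S \<union> qubits g) D (U, W(q := BX (W q) (U q)))"
      by (rule bnd_updW[OF B]) (use d Sg in auto)
    then show ?thesis using P Sg by simp
  next
    case (Tg q) then have q: "q \<notin> S" using assms(1) by auto
    have d: "dep (U q) \<le> D" using bnd_get[OF assms(2)[unfolded P] q] by auto
    then show ?thesis using P Tg B by simp
  next
    case (CNOTg a c) then have q: "a \<notin> S" "c \<notin> S" using assms(1) by auto
    have d: "dep (U a) \<le> D" "dep (W a) \<le> D" "dep (U c) \<le> D" "dep (W c) \<le> D"
      using bnd_get[OF assms(2)[unfolded P] q(1)] bnd_get[OF assms(2)[unfolded P] q(2)] by auto
    have "bnd (S \<union> qubits g) D (U(c := BX (U c) (U a)), W(a := BX (W a) (W c)))"
      by (rule bnd_updW[OF bnd_updU[OF B]]) (use d CNOTg in auto)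
    then show ?thesis using P CNOTg by simp
  qed
qed



fun pdisj :: "qgate list \<Rightarrow> bool" where
  "pdisj [] = True"
| "pdisj (g # L) = ((\<forall>h\<in>set L. qubits g \<inter> qubits h = {}) \<and> pdisj L)"

lemma pdisj_of_idx: "(\<forall>i<length L. \<forall>j<length L. i \<noteq> j \<longrightarrow> qubits (L ! i) \<inter> qubits (L ! j) = {}) \<Longrightarrow> pdisj L"
proof (induction L)
  case (Cons g L)
  have "\<forall>h\<in>set L. qubits g \<inter> qubits h = {}"
  proof
    fix h assume "h \<in> set L"
    then obtain k where k: "k < length L" "h = L ! k" by (metis in_set_conv_nth)
    then show "qubits g \<inter> qubits h = {}" using Cons.prems[rule_format, of 0 "Suc k"] by simp
  qed
  moreover have "pdisj L"
    using Cons.prems by (intro Cons.IH) (metis Suc_less_eq nat.inject nth_Cons_Suc length_Cons)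
  ultimately show ?case by simp
qed simp

lemma layer_bnd: "pdisj L \<Longrightarrow> (\<forall>g\<in>set L. qubits g \<inter> S = {}) \<Longrightarrow> bnd S D P \<Longrightarrow>
   bnd UNIV D (fst (ss L P)) \<and> (\<forall>e\<in>set (snd (ss L P)). dep e \<le> D + 3)"
proof (induction L arbitrary: S P)
  case Nil then show ?case using bnd_mono by auto
next
  case (Cons g L)
  have s: "bnd (S \<union> qubits g) D (sstep g P) \<and> (\<forall>e\<in>set (stbit g P). dep e \<le> D + 3)"
    using sstep_bnd[of g S D P] Cons.prems by simp
  have "bnd UNIV D (fst (ss L (sstep g P))) \<and> (\<forall>e\<in>set (snd (ss L (sstep g P))). dep e \<le> D + 3)"
    using Cons.prems s by (intro Cons.IH[of "S \<union> qubits g"]) auto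
  then show ?case using s by auto
qed

lemma bnd_univ: "bnd UNIV D P \<Longrightarrow> bnd {} (D + 3) P"
  by (simp add: bnd_def)

lemma circ_bnd: "\<forall>L\<in>set Q. pdisj L \<Longrightarrow> bnd {} D P \<Longrightarrow>
   bnd {} (D + 3 * length Q) (fst (ss (concat Q) P)) \<and> (\<forall>e\<in>set (snd (ss (concat Q) P)). dep e \<le> D + 3 * length Q)"
proof (induction Q arbitrary: D P)
  case Nil then show ?case by simp
next
  case (Cons L Q)
  have l: "bnd UNIV D (fst (ss L P)) \<and> (\<forall>e\<in>set (snd (ss L P)). dep e \<le> D + 3)"
    using Cons.prems by (intro layer_bnd) auto
  have r: "bnd {} (D + 3 + 3 * length Q) (fst (ss (concat Q) (fst (ss L P)))) \<and>
     (\<forall>e\<in>set (snd (ss (concat Q) (fst (ss L P)))). dep e \<le> D + 3 + 3 * length Q)"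
    using Cons.prems l bnd_univ by (intro Cons.IH) auto
  have e: "D + 3 * length (L # Q) = D + 3 + 3 * length Q" by simp
  show ?case unfolding e using l r by (auto simp: ss_append)
qed

lemma bnd0: "bnd {} D P \<Longrightarrow> dep (fst P i) \<le> D" "bnd {} D P \<Longrightarrow> dep (snd P i) \<le> D"
  by (auto simp: bnd_def)



lemma fl_prefix: "\<exists>r. foldl (\<lambda>vs g. vs @ [h vs g]) a gs = a @ r"
  by (induction gs arbitrary: a) (auto, metis append.assoc)

lemma fl_len: "length (foldl (\<lambda>vs g. vs @ [h vs g]) a gs) = length a + length gs"
  by (induction gs arbitrary: a) auto

lemma fl_nth: "i < length a + length gs \<Longrightarrow>
  foldl (\<lambda>vs g. vs @ [h vs g]) a (gs @ hs) ! i = foldl (\<lambda>vs g. vs @ [h vs g]) a gs ! i"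
proof -
  assume i: "i < length a + length gs"
  obtain r where r: "foldl (\<lambda>vs g. vs @ [h vs g]) (foldl (\<lambda>vs g. vs @ [h vs g]) a gs) hs = foldl (\<lambda>vs g. vs @ [h vs g]) a gs @ r"
    using fl_prefix by blast
  show ?thesis using i by (simp add: r nth_append fl_len)
qed

lemma fl_snoc: "foldl (\<lambda>vs g. vs @ [h vs g]) a (gs @ [g]) = foldl (\<lambda>vs g. vs @ [h vs g]) a gs @ [h (foldl (\<lambda>vs g. vs @ [h vs g]) a gs) g]"
  by simp

lemma wv_nth: "i < length x + length gs \<Longrightarrow> wire_vals (gs @ hs) x ! i = wire_vals gs x ! i"
  unfolding wire_vals_def by (rule fl_nth)
lemma wv_len: "length (wire_vals gs x) = length x + length gs"
  unfolding wire_vals_def by (rule fl_len)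
lemma wv_snoc: "wire_vals (gs @ [g]) x = wire_vals gs x @ [cgate_val (wire_vals gs x) g]"
  unfolding wire_vals_def by (rule fl_snoc)
lemma wv_in: "i < length x \<Longrightarrow> wire_vals gs x ! i = x ! i"
  using wv_nth[of i x "[]" gs] by (simp add: wire_vals_def)

lemma wd_nth: "i < n + length gs \<Longrightarrow> wire_depths n (gs @ hs) ! i = wire_depths n gs ! i"
  unfolding wire_depths_def using fl_nth[of i "replicate n 0" gs] by simp
lemma wd_len: "length (wire_depths n gs) = n + length gs"
  unfolding wire_depths_def using fl_len[of _ "replicate n 0"] by simp
lemma wd_snoc: "wire_depths n (gs @ [g]) = wire_depths n gs @ [cgate_depth (wire_depths n gs) g]"
  unfolding wire_depths_def by (rule fl_snoc)
lemma wd_in: "i < n \<Longrightarrow> wire_depths n gs ! i = 0"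
  using wd_nth[of i n "[]" gs] by (simp add: wire_depths_def)

definition gv :: "nat \<Rightarrow> cgate list \<Rightarrow> bool" where
  "gv b hs \<longleftrightarrow> (\<forall>k<length hs. \<forall>i\<in>cgate_inputs (hs ! k). i < b + k)"

lemma gv_append: "gv b (h1 @ h2) \<longleftrightarrow> gv b h1 \<and> gv (b + length h1) h2"
  unfolding gv_def
proof (intro iffI conjI allI impI)
  fix k assume A: "\<forall>k<length (h1 @ h2). \<forall>i\<in>cgate_inputs ((h1 @ h2) ! k). i < b + k"
  { assume "k < length h1" then show "\<forall>i\<in>cgate_inputs (h1 ! k). i < b + k"
      using A[rule_format, of k] by (simp add: nth_append) }
  { assume "k < length h2" then show "\<forall>i\<in>cgate_inputs (h2 ! k). i < b + length h1 + k"
      using A[rule_format, of "length h1 + k"] by (simp add: nth_append add.assoc) }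
next
  fix k assume A: "(\<forall>k<length h1. \<forall>i\<in>cgate_inputs (h1 ! k). i < b + k) \<and>
         (\<forall>k<length h2. \<forall>i\<in>cgate_inputs (h2 ! k). i < b + length h1 + k)" and k: "k < length (h1 @ h2)"
  show "\<forall>i\<in>cgate_inputs ((h1 @ h2) ! k). i < b + k"
  proof (cases "k < length h1")
    case True then show ?thesis using A by (simp add: nth_append)
  next
    case False
    then have "k - length h1 < length h2" using k by simp
    then show ?thesis using A False by (auto simp: nth_append)
  qed
qed

fun bcomp :: "nat \<Rightarrow> bexp \<Rightarrow> cgate list \<times> nat" where
  "bcomp b (BV i) = ([], i)"
| "bcomp b (BN e) = (fst (bcomp b e) @ [NotG (snd (bcomp b e))], b + length (fst (bcomp b e)))"
| "bcomp b (BA e1 e2) = (fst (bcomp b e1) @ fst (bcomp (b + length (fst (bcomp b e1))) e2) @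
      [AndG (snd (bcomp b e1)) (snd (bcomp (b + length (fst (bcomp b e1))) e2))],
      b + length (fst (bcomp b e1)) + length (fst (bcomp (b + length (fst (bcomp b e1))) e2)))"
| "bcomp b (BO e1 e2) = (fst (bcomp b e1) @ fst (bcomp (b + length (fst (bcomp b e1))) e2) @
      [OrG (snd (bcomp b e1)) (snd (bcomp (b + length (fst (bcomp b e1))) e2))],
      b + length (fst (bcomp b e1)) + length (fst (bcomp (b + length (fst (bcomp b e1))) e2)))"

definition cok :: "nat \<Rightarrow> bool list \<Rightarrow> cgate list \<Rightarrow> cgate list \<Rightarrow> nat \<Rightarrow> bexp \<Rightarrow> bool" where
  "cok n x gs hs w e \<longleftrightarrow> w < n + length gs + length hs \<and> gv (n + length gs) hs \<and>
     wire_vals (gs @ hs) x ! w = ev e x \<and> wire_depths n (gs @ hs) ! w \<le> dep e"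

lemma comp_bin:
  assumes x: "length x = n"
    and c1: "cok n x gs h1 w1 e1" and c2: "cok n x (gs @ h1) h2 w2 e2"
    and gt: "g = AndG w1 w2 \<and> f = (\<lambda>a b. a \<and> b) \<or> g = OrG w1 w2 \<and> f = (\<lambda>a b. a \<or> b)"
  shows "wire_vals (gs @ h1 @ h2 @ [g]) x ! (n + length gs + length h1 + length h2) = f (ev e1 x) (ev e2 x)
    \<and> wire_depths n (gs @ h1 @ h2 @ [g]) ! (n + length gs + length h1 + length h2) \<le> Suc (max (dep e1) (dep e2))
    \<and> gv (n + length gs) (h1 @ h2 @ [g])"
proof -
  let ?V = "wire_vals (gs @ h1 @ h2) x"
  let ?D = "wire_depths n (gs @ h1 @ h2)"
  have l1: "length ?V = n + length gs + length h1 + length h2" using x by (simp add: wv_len)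
  have l2: "length ?D = n + length gs + length h1 + length h2" by (simp add: wd_len)
  have w1: "w1 < n + length gs + length h1" using c1 by (simp add: cok_def)
  have w2: "w2 < n + length gs + length h1 + length h2" using c2 by (simp add: cok_def)
  have v1: "?V ! w1 = ev e1 x" using c1 wv_nth[of w1 x "gs @ h1" h2] w1 x by (simp add: cok_def)
  have v2: "?V ! w2 = ev e2 x" using c2 by (simp add: cok_def)
  have d1: "?D ! w1 \<le> dep e1" using c1 wd_nth[of w1 n "gs @ h1" h2] w1 by (simp add: cok_def)
  have d2: "?D ! w2 \<le> dep e2" using c2 by (simp add: cok_def)
  have e1: "gs @ h1 @ h2 @ [g] = (gs @ h1 @ h2) @ [g]" by simp
  have val: "wire_vals (gs @ h1 @ h2 @ [g]) x ! (n + length gs + length h1 + length h2) = cgate_val ?V g"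
    unfolding e1 wv_snoc using l1 by (simp add: nth_append)
  have dd: "wire_depths n (gs @ h1 @ h2 @ [g]) ! (n + length gs + length h1 + length h2) = cgate_depth ?D g"
    unfolding e1 wd_snoc using l2 by (simp add: nth_append)
  have g1: "gv (n + length gs) h1" using c1 by (simp add: cok_def)
  have g2: "gv (n + length gs + length h1) h2" using c2 by (simp add: cok_def add.assoc)
  have g3: "gv (n + length gs + length h1 + length h2) [g]" using gt w1 w2 by (auto simp: gv_def)
  have G: "gv (n + length gs) (h1 @ h2 @ [g])" using g1 g2 g3 by (simp add: gv_append add.assoc)
  show ?thesis using gt val dd v1 v2 d1 d2 G by (auto simp: max_def)
qed

lemma comp_ok: "length x = n \<Longrightarrow> vok n e \<Longrightarrow> cok n x gs (fst (bcomp (n + length gs) e)) (snd (bcomp (n + length gs) e)) e"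
proof (induction e arbitrary: gs)
  case (BV i) then show ?case by (simp add: cok_def gv_def wv_in wd_in)
next
  case (BN e)
  let ?h = "fst (bcomp (n + length gs) e)" and ?w = "snd (bcomp (n + length gs) e)"
  have c: "cok n x gs ?h ?w e" using BN by simp
  let ?V = "wire_vals (gs @ ?h) x"
  let ?D = "wire_depths n (gs @ ?h)"
  have e1: "gs @ ?h @ [NotG ?w] = (gs @ ?h) @ [NotG ?w]" by simp
  have l1: "length ?V = n + length gs + length ?h" using BN by (simp add: wv_len)
  have l2: "length ?D = n + length gs + length ?h" by (simp add: wd_len)
  have val: "wire_vals (gs @ ?h @ [NotG ?w]) x ! (n + length gs + length ?h) = (\<not> ?V ! ?w)"
    unfolding e1 wv_snoc using l1 by (simp add: nth_append)
  have dd: "wire_depths n (gs @ ?h @ [NotG ?w]) ! (n + length gs + length ?h) = Suc (?D ! ?w)"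
    unfolding e1 wd_snoc using l2 by (simp add: nth_append)
  have g3: "gv (n + length gs + length ?h) [NotG ?w]" using c by (auto simp: gv_def cok_def)
  show ?case using c val dd g3 by (auto simp: cok_def gv_append)
next
  case (BA e1 e2)
  let ?h1 = "fst (bcomp (n + length gs) e1)" and ?w1 = "snd (bcomp (n + length gs) e1)"
  have c1: "cok n x gs ?h1 ?w1 e1" using BA by simp
  let ?h2 = "fst (bcomp (n + length (gs @ ?h1)) e2)" and ?w2 = "snd (bcomp (n + length (gs @ ?h1)) e2)"
  have c2: "cok n x (gs @ ?h1) ?h2 ?w2 e2" using BA.IH(2)[of "gs @ ?h1"] BA.prems by simp
  have r: "wire_vals (gs @ ?h1 @ ?h2 @ [AndG ?w1 ?w2]) x ! (n + length gs + length ?h1 + length ?h2) = (ev e1 x \<and> ev e2 x)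
    \<and> wire_depths n (gs @ ?h1 @ ?h2 @ [AndG ?w1 ?w2]) ! (n + length gs + length ?h1 + length ?h2) \<le> Suc (max (dep e1) (dep e2))
    \<and> gv (n + length gs) (?h1 @ ?h2 @ [AndG ?w1 ?w2])"
    by (rule comp_bin[OF BA.prems(1) c1 c2]) simp
  then show ?case by (simp add: cok_def add.assoc)
next
  case (BO e1 e2)
  let ?h1 = "fst (bcomp (n + length gs) e1)" and ?w1 = "snd (bcomp (n + length gs) e1)"
  have c1: "cok n x gs ?h1 ?w1 e1" using BO by simp
  let ?h2 = "fst (bcomp (n + length (gs @ ?h1)) e2)" and ?w2 = "snd (bcomp (n + length (gs @ ?h1)) e2)"
  have c2: "cok n x (gs @ ?h1) ?h2 ?w2 e2" using BO.IH(2)[of "gs @ ?h1"] BO.prems by simp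
  have r: "wire_vals (gs @ ?h1 @ ?h2 @ [OrG ?w1 ?w2]) x ! (n + length gs + length ?h1 + length ?h2) = (ev e1 x \<or> ev e2 x)
    \<and> wire_depths n (gs @ ?h1 @ ?h2 @ [OrG ?w1 ?w2]) ! (n + length gs + length ?h1 + length ?h2) \<le> Suc (max (dep e1) (dep e2))
    \<and> gv (n + length gs) (?h1 @ ?h2 @ [OrG ?w1 ?w2])"
    by (rule comp_bin[OF BO.prems(1) c1 c2]) simp
  then show ?case by (simp add: cok_def add.assoc)
qed



fun bcompl :: "nat \<Rightarrow> bexp list \<Rightarrow> cgate list \<times> nat list" where
  "bcompl b [] = ([], [])"
| "bcompl b (e # es) = (fst (bcomp b e) @ fst (bcompl (b + length (fst (bcomp b e))) es),
     snd (bcomp b e) # snd (bcompl (b + length (fst (bcomp b e))) es))"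

lemma compl_ok: "length x = n \<Longrightarrow> \<forall>e\<in>set es. vok n e \<Longrightarrow>
  length (snd (bcompl (n + length gs) es)) = length es \<and> gv (n + length gs) (fst (bcompl (n + length gs) es)) \<and>
  (\<forall>j<length es. snd (bcompl (n + length gs) es) ! j < n + length gs + length (fst (bcompl (n + length gs) es)) \<and>
     wire_vals (gs @ fst (bcompl (n + length gs) es)) x ! (snd (bcompl (n + length gs) es) ! j) = ev (es ! j) x \<and>
     wire_depths n (gs @ fst (bcompl (n + length gs) es)) ! (snd (bcompl (n + length gs) es) ! j) \<le> dep (es ! j))"
proof (induction es arbitrary: gs)
  case Nil then show ?case by (simp add: gv_def)
next
  case (Cons e es)
  let ?h1 = "fst (bcomp (n + length gs) e)" and ?w = "snd (bcomp (n + length gs) e)"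
  have c: "cok n x gs ?h1 ?w e" using comp_ok Cons.prems by simp
  let ?h2 = "fst (bcompl (n + length (gs @ ?h1)) es)" and ?ws = "snd (bcompl (n + length (gs @ ?h1)) es)"
  have I: "length ?ws = length es \<and> gv (n + length (gs @ ?h1)) ?h2 \<and>
  (\<forall>j<length es. ?ws ! j < n + length (gs @ ?h1) + length ?h2 \<and>
     wire_vals ((gs @ ?h1) @ ?h2) x ! (?ws ! j) = ev (es ! j) x \<and>
     wire_depths n ((gs @ ?h1) @ ?h2) ! (?ws ! j) \<le> dep (es ! j))"
    using Cons.IH[of "gs @ ?h1"] Cons.prems by simp
  have w: "?w < n + length gs + length ?h1" using c by (simp add: cok_def)
  have v0: "wire_vals (gs @ ?h1 @ ?h2) x ! ?w = ev e x"
    using wv_nth[of ?w x "gs @ ?h1" ?h2] w c Cons.prems(1) by (simp add: cok_def)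
  have d0: "wire_depths n (gs @ ?h1 @ ?h2) ! ?w \<le> dep e"
    using wd_nth[of ?w n "gs @ ?h1" ?h2] w c by (simp add: cok_def)
  have g: "gv (n + length gs) (?h1 @ ?h2)" using c I by (simp add: gv_append cok_def add.assoc)
  have e1: "n + length gs + length ?h1 = n + length gs + length ?h1" by simp
  show ?case
  proof (rule conjI[OF _ conjI[OF _ allI[OF impI]]])
    show "length (snd (bcompl (n + length gs) (e # es))) = length (e # es)" using I by (simp add: add.assoc)
    show "gv (n + length gs) (fst (bcompl (n + length gs) (e # es)))" using g by (simp add: add.assoc)
  next
    fix j assume j: "j < length (e # es)"
    show "snd (bcompl (n + length gs) (e # es)) ! j < n + length gs + length (fst (bcompl (n + length gs) (e # es)))
      \<and> wire_vals (gs @ fst (bcompl (n + length gs) (e # es))) x ! (snd (bcompl (n + length gs) (e # es)) ! j) = ev ((e # es) ! j) x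
      \<and> wire_depths n (gs @ fst (bcompl (n + length gs) (e # es))) ! (snd (bcompl (n + length gs) (e # es)) ! j) \<le> dep ((e # es) ! j)"
    proof (cases j)
      case 0 then show ?thesis using w v0 d0 by (simp add: add.assoc)
    next
      case (Suc k) then have k: "k < length es" using j by simp
      then show ?thesis using I Suc by (simp add: add.assoc)
    qed
  qed
qed

lemma fold_max_le: "\<forall>a\<in>set xs. a \<le> (M::nat) \<Longrightarrow> z \<le> M \<Longrightarrow> fold max xs z \<le> M"
  by (induction xs arbitrary: z) auto



lemma rep_basis: assumes x: "length x = n"
  shows "rep n (basis_state x) 1 (\<lambda>i. if i < n then x ! i else False) (\<lambda>i. False) (basis_state (replicate n False))"
  unfolding rep_def
proof (intro allI impI)
  fix y :: "bool list" assume y: "length y = n"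
  have "(xorv y (\<lambda>i. if i < n then x ! i else False) = replicate n False) = (y = x)"
    using x y by (auto simp: list_eq_iff_nth_eq)
  moreover have "psgn (\<lambda>i. False) y = 1" by (simp add: psgn_def)
  ultimately show "basis_state x y = 1 * psgn (\<lambda>i. False) y * basis_state (replicate n False) (xorv y (\<lambda>i. if i < n then x ! i else False))"
    by (simp add: basis_state_def)
qed

lemma main: assumes n: "0 < n" and wf: "qcirc_wf n Q"
  shows "\<exists>C. ccirc_wf n C \<and> ccirc_depth n C \<le> 3 * length Q + 2 * t_count Q + 7 \<and>
           (\<forall>x. length x = n \<longrightarrow> qamp Q x (ccirc_eval C x) \<noteq> 0)"
proof -
  define gs where "gs = concat Q"
  have gwf: "\<forall>g\<in>set gs. qgate_wf n g" using wf by (auto simp: gs_def qcirc_wf_def layer_wf_def)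
  have pd: "\<forall>L\<in>set Q. pdisj L"
  proof
    fix L assume "L \<in> set Q"
    then have "layer_wf n L" using wf by (simp add: qcirc_wf_def)
    then show "pdisj L" unfolding layer_wf_def by (intro pdisj_of_idx) blast
  qed
  define P0 :: sframe where "P0 = ((\<lambda>i. if i < n then BV i else FF), (\<lambda>i. FF))"
  define Pf where "Pf = fst (ss gs P0)"
  define ms where "ms = snd (ss gs P0)"
  define \<phi>0 where "\<phi>0 = basis_state (replicate n False)"
  define ysel where "ysel = (\<lambda>b. SOME y. length y = n \<and> run_mod gs b \<phi>0 y \<noteq> 0)"
  have ysel: "length (ysel b) = n \<and> run_mod gs b \<phi>0 (ysel b) \<noteq> 0" for b
  proof -
    have "nz n \<phi>0" unfolding nz_def \<phi>0_def basis_state_def by (intro exI[of _ "replicate n False"]) simp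
    then have "nz n (run_mod gs b \<phi>0)" using nz_run gwf by blast
    then show ?thesis unfolding ysel_def nz_def by (rule someI_ex)
  qed
  define es where "es = map (\<lambda>i. BX (lut ms (\<lambda>b. ysel b ! i)) (fst Pf i)) [0..<n]"
  define C where "C = bcompl n es"
  have les: "length es = n" by (simp add: es_def)
  have vP0: "vokP n P0" using n by (simp add: vokP_def P0_def)
  have vs: "vokP n Pf \<and> (\<forall>e\<in>set ms. vok n e)" using ss_vok[OF vP0] Pf_def ms_def by simp
  have ves: "\<forall>e\<in>set es. vok n e" using vs n by (auto simp: es_def vokP_def intro!: lut_vok)
  have b0: "bnd {} 2 P0" by (simp add: bnd_def P0_def)
  have cb: "bnd {} (2 + 3 * length Q) Pf \<and> (\<forall>e\<in>set ms. dep e \<le> 2 + 3 * length Q)"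
    using circ_bnd[OF pd b0] by (simp add: Pf_def ms_def gs_def)
  have lms: "length ms = t_count Q" by (simp add: ms_def ss_len t_count_def gs_def)
  have des: "dep (es ! j) \<le> 3 * length Q + 2 * t_count Q + 7" if j: "j < n" for j
  proof -
    have e: "es ! j = BX (lut ms (\<lambda>b. ysel b ! j)) (fst Pf j)" using j by (simp add: es_def)
    have "dep (lut ms (\<lambda>b. ysel b ! j)) \<le> 2 * length ms + 2 + (2 + 3 * length Q)" using cb lut_dep by blast
    moreover have "dep (fst Pf j) \<le> 2 + 3 * length Q" using cb bnd0 by blast
    ultimately show ?thesis using lms by (simp add: e)
  qed
  have CO: "length (snd C) = n \<and> gv n (fst C) \<and>
    (\<forall>j<n. snd C ! j < n + length (fst C) \<and> wire_vals (fst C) x ! (snd C ! j) = ev (es ! j) x \<and>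
       wire_depths n (fst C) ! (snd C ! j) \<le> dep (es ! j))" if x: "length x = n" for x
    using compl_ok[OF x ves, of "[]"] les by (simp add: C_def)
  note CO0 = CO[of "replicate n False", simplified]
  show ?thesis
  proof (intro exI[of _ C] conjI allI impI)
    show "ccirc_wf n C" using CO0 unfolding ccirc_wf_def gv_def by (auto simp: in_set_conv_nth)
    show "ccirc_depth n C \<le> 3 * length Q + 2 * t_count Q + 7"
      unfolding ccirc_depth_def
    proof (rule fold_max_le)
      show "\<forall>a\<in>set (map (\<lambda>w. wire_depths n (fst C) ! w) (snd C)). a \<le> 3 * length Q + 2 * t_count Q + 7"
      proof
        fix a assume "a \<in> set (map (\<lambda>w. wire_depths n (fst C) ! w) (snd C))"
        then obtain j where j: "j < n" "a = wire_depths n (fst C) ! (snd C ! j)"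
          using CO0 by (auto simp: in_set_conv_nth)
        then show "a \<le> 3 * length Q + 2 * t_count Q + 7" using CO0 des[OF j(1)] by (meson le_trans)
      qed
    qed simp
  next
    fix x :: "bool list" assume x: "length x = n"
    define uf where "uf = (\<lambda>i. ev (fst Pf i) x)"
    define bits where "bits = map (\<lambda>m. ev m x) ms"
    have out: "ccirc_eval C x = xorv (ysel bits) uf"
    proof (rule nth_equalityI)
      show "length (ccirc_eval C x) = length (xorv (ysel bits) uf)" using CO[OF x] ysel by (simp add: ccirc_eval_def)
    next
      fix j assume "j < length (ccirc_eval C x)"
      then have j: "j < n" using CO[OF x] by (simp add: ccirc_eval_def)
      have "ccirc_eval C x ! j = ev (es ! j) x" using CO[OF x] j by (simp add: ccirc_eval_def)
      also have "\<dots> = (ysel bits ! j \<noteq> uf j)" using j by (simp add: es_def lut_ev uf_def bits_def)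
      also have "\<dots> = xorv (ysel bits) uf ! j" using j ysel by simp
      finally show "ccirc_eval C x ! j = xorv (ysel bits) uf ! j" .
    qed
    have e0: "(\<lambda>i. if i < n then x ! i else False, \<lambda>i. False) = evf x P0"
      by (auto simp: evf_def P0_def fun_eq_iff)
    have csr: "cs gs (evf x P0) = (evf x Pf, bits)" by (simp add: cs_evf Pf_def ms_def bits_def)
    obtain c' where c': "c' \<noteq> 0" and r: "rep n (fold apply_gate gs (basis_state x)) c'
        (fst (fst (cs gs (evf x P0)))) (snd (fst (cs gs (evf x P0)))) (run_mod gs (snd (cs gs (evf x P0))) \<phi>0)"
      using rep_run[OF rep_basis[OF x] _ gwf] e0 \<phi>0_def by auto
    have r2: "fold apply_gate gs (basis_state x) y = c' * psgn (snd (evf x Pf)) y * run_mod gs bits \<phi>0 (xorv y uf)"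
      if "length y = n" for y
      using r that unfolding rep_def csr by (simp add: evf_def uf_def)
    have "qamp Q x (ccirc_eval C x) = c' * psgn (snd (evf x Pf)) (ccirc_eval C x) * run_mod gs bits \<phi>0 (ysel bits)"
      unfolding qamp_def run_qcirc_def gs_def[symmetric] using r2[of "ccirc_eval C x"] out ysel by simp
    then show "qamp Q x (ccirc_eval C x) \<noteq> 0" using c' psgn_nz ysel by simp
  qed
qed

theorem corollary1:
  shows "\<exists>c::real. c > 0 \<and>
    (\<forall>(n::nat) (d::nat) (t::nat) (Q::qcircuit).
       n \<ge> 1 \<longrightarrow> d \<ge> 1 \<longrightarrow> qcirc_wf n Q \<longrightarrow> qdepth Q = d \<longrightarrow> t_count Q = t \<longrightarrow>
       (\<exists>C::ccircuit. ccirc_wf n C \<and> real (ccirc_depth n C) \<le> c * real (d + t) \<and>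
          (\<forall>x. length x = n \<longrightarrow> qamp Q x (ccirc_eval C x) \<noteq> 0)))"
proof (rule exI[of _ 10], intro conjI allI impI)
  show "(0::real) < 10" by simp
  fix n d t :: nat and Q :: qcircuit
  assume n: "1 \<le> n" and d: "1 \<le> d" and wf: "qcirc_wf n Q" and qd: "qdepth Q = d" and tc: "t_count Q = t"
  obtain C where C: "ccirc_wf n C" "ccirc_depth n C \<le> 3 * length Q + 2 * t_count Q + 7"
      "\<forall>x. length x = n \<longrightarrow> qamp Q x (ccirc_eval C x) \<noteq> 0"
    using main[OF _ wf] n by auto
  have "ccirc_depth n C \<le> 10 * (d + t)" using C(2) qd tc d by (simp add: qdepth_def)
  then have "real (ccirc_depth n C) \<le> 10 * real (d + t)" by linarith
  then show "\<exists>C. ccirc_wf n C \<and> real (ccirc_depth n C) \<le> 10 * real (d + t) \<and>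
          (\<forall>x. length x = n \<longrightarrow> qamp Q x (ccirc_eval C x) \<noteq> 0)" using C by blast
qed

end
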